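(* Let $(X,d,f)$ be a dynamical system and let $\mathcal{A}=\{\mathcal{U}_n\}_{n\in\mathbb{N}}$ be a complete tame defining sequence of $(X,d)$. Assume that $f$ has the finite shadowing property. Then: (i) $f$ is conjugate to the inverse limit of a sequence of 1-step shifts on a countable alphabet; more precisely, $(X,d,f)$ is topologically conjugate to $\big(\varprojlim(\hookrightarrow,\mathcal{PO}(\mathcal{U}_n)),\sigma^*\big)$; (ii) if moreover $f$ is uniformly continuous, then this conjugacy can be chosen uniform, i.e. the conjugating homeomorphism and its inverse are uniformly continuous.
   Context: All spaces are nonempty separable metrizable spaces. A dynamical system $(X,d,f)$ is a space $X$ with an admissible metric $d$ and a continuous map $f:X\to X$. A partition of $X$ is a cover by pairwise disjoint nonempty clopen sets; for a partition $\mathcal{U}$ and $x\in X$, $\mathcal{U}[x]$ is the element of $\mathcal{U}$ containing $x$. A defining sequence of $X$ is a sequence $\{\mathcal{U}_n\}_{n\in\mathbb{N}}$ of partitions such that each element of $\mathcal{U}_{n+1}$ is contained in an element of $\mathcal{U}_n$, and $\bigcup_n\mathcal{U}_n$ is a basis of the topology. It is complete if whenever $U_n\in\mathcal{U}_n$ with $U_{n+1}\subseteq U_n$ for all $n$, $\bigcap_nU_n\neq\emptyset$. It is tame (with respect to $d$) if $S_n:=\sup\{\operatorname{diam}(O):O\in\mathcal{U}_n\}\to0$ and for each $n$ there is $\rho_n>0$ with $d(x_1,x_2)\ge\rho_n$ whenever $x_1,x_2$ lie in distinct elements of $\mathcal{U}_n$. A $\delta$-pseudo-orbit is a (finite or infinite)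 sequence $(x_n)$ with $d(f(x_n),x_{n+1})<\delta$ for all consecutive indices; $x$ $\varepsilon$-shadows $(x_n)$ if $d(f^n(x),x_n)<\varepsilon$ for all indices $n$. $f$ has the finite shadowing property if for every $\varepsilon>0$ there is $\delta>0$ such that every finite $\delta$-pseudo-orbit is $\varepsilon$-shadowed by some point; the shadowing property is the same with infinite pseudo-orbits. For a partition $\mathcal{U}$ (with the discrete metric), $\mathcal{PO}(\mathcal{U})=\{(O_i)_{i\in\mathbb{N}}\in\mathcal{U}^{\mathbb{N}}: f(O_i)\cap O_{i+1}\neq\emptyset\ \forall i\}$, a 1-step shift space (shift space over the countable alphabet $\mathcal{U}$ defined by forbidden words of length 2) with shift map $\sigma(O_i)_i=(O_{i+1})_i$ and metric $d((O_i),(O'_i))=1/(i+1)$ for the least $i$ with $O_i\ne O'_i$. The bonding map $\hookrightarrow:\mathcal{PO}(\mathcal{U}_{n+1})\to\mathcal{PO}(\mathcal{U}_n)$ sends $(O_i)$ to the unique $(V_i)\in\mathcal{U}_n^{\mathbb{N}}$ with $O_i\subseteq V_i$ for all $i$. The inverse limit $\varprojlim(\hookrightarrow,\mathcal{PO}(\mathcal{U}_n))=\{(y_n)\in\prod_n\mathcal{PO}(\mathcal{U}_n): y_n=\hookrightarrow(y_{n+1})\ \forall n\}$, with metric $d_\Pi((y_n),(z_n))=\max_n d(y_n,z_n)/(n+1)$, and $\sigma^*$ is the restriction to it of the product of the shift maps. *)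

theory Defs
  imports "HOL-Analysis.Analysis"
begin

text \<open>The space X is the whole (nonempty) type 'a of class metric_space; its admissible
metric d is dist. A partition: cover by pairwise disjoint nonempty clopen sets.\<close>

definition clopen_partition :: "'a::topological_space set set \<Rightarrow> bool" where
  "clopen_partition U \<longleftrightarrow>
     (\<forall>B\<in>U. B \<noteq> {} \<and> open B \<and> closed B) \<and>
     (\<forall>B1\<in>U. \<forall>B2\<in>U. B1 \<noteq> B2 \<longrightarrow> B1 \<inter> B2 = {}) \<and>
     \<Union>U = UNIV"

definition defining_sequence :: "(nat \<Rightarrow> 'a::topological_space set set) \<Rightarrow> bool" where
  "defining_sequence \<U> \<longleftrightarrow>
     (\<forall>n. clopen_partition (\<U> n)) \<and>
     (\<forall>n. \<forall>B\<in>\<U> (Suc n). \<exists>V\<in>\<U> n. B \<subseteq> V) \<and>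
     topological_basis (\<Union>n. \<U> n)"

definition complete_defseq :: "(nat \<Rightarrow> 'a set set) \<Rightarrow> bool" where
  "complete_defseq \<U> \<longleftrightarrow>
     (\<forall>W::nat \<Rightarrow> 'a set. (\<forall>n. W n \<in> \<U> n) \<and> (\<forall>n. W (Suc n) \<subseteq> W n)
        \<longrightarrow> (\<Inter>n. W n) \<noteq> {})"

definition tame_defseq :: "(nat \<Rightarrow> 'a::metric_space set set) \<Rightarrow> bool" where
  "tame_defseq \<U> \<longleftrightarrow>
     (\<forall>e>0. \<exists>N. \<forall>n\<ge>N. \<forall>B\<in>\<U> n. \<forall>x\<in>B. \<forall>y\<in>B. dist x y \<le> e) \<and>
     (\<forall>n. \<exists>\<rho>>0. \<forall>B1\<in>\<U> n. \<forall>B2\<in>\<U> n. B1 \<noteq> B2 \<longrightarrow>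
          (\<forall>x1\<in>B1. \<forall>x2\<in>B2. dist x1 x2 \<ge> \<rho>))"

definition finite_shadowing :: "('a::metric_space \<Rightarrow> 'a) \<Rightarrow> bool" where
  "finite_shadowing f \<longleftrightarrow>
     (\<forall>\<epsilon>>0. \<exists>\<delta>>0. \<forall>(m::nat) (xs::nat \<Rightarrow> 'a).
        (\<forall>i<m. dist (f (xs i)) (xs (Suc i)) < \<delta>) \<longrightarrow>
        (\<exists>x. \<forall>i\<le>m. dist ((f ^^ i) x) (xs i) < \<epsilon>))"

definition PO :: "('a \<Rightarrow> 'a) \<Rightarrow> 'a set set \<Rightarrow> (nat \<Rightarrow> 'a set) set" where
  "PO f U = {Os. (\<forall>i. Os i \<in> U) \<and> (\<forall>i. f ` (Os i) \<inter> Os (Suc i) \<noteq> {})}"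

definition seq_dist :: "(nat \<Rightarrow> 'b) \<Rightarrow> (nat \<Rightarrow> 'b) \<Rightarrow> real" where
  "seq_dist s t = (if s = t then 0 else 1 / real (Suc (LEAST i. s i \<noteq> t i)))"

definition shift :: "(nat \<Rightarrow> 'b) \<Rightarrow> (nat \<Rightarrow> 'b)" where
  "shift s = (\<lambda>i. s (Suc i))"

definition bond :: "'a set set \<Rightarrow> (nat \<Rightarrow> 'a set) \<Rightarrow> (nat \<Rightarrow> 'a set)" where
  "bond U Os = (\<lambda>i. THE V. V \<in> U \<and> Os i \<subseteq> V)"

definition inv_lim :: "('a \<Rightarrow> 'a) \<Rightarrow> (nat \<Rightarrow> 'a set set) \<Rightarrow> (nat \<Rightarrow> nat \<Rightarrow> 'a set) set" where
  "inv_lim f \<U> = {ys. (\<forall>n. ys n \<in> PO f (\<U> n)) \<and> (\<forall>n. ys n = bond (\<U> n) (ys (Suc n)))}"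

definition dist_Pi :: "(nat \<Rightarrow> nat \<Rightarrow> 'b) \<Rightarrow> (nat \<Rightarrow> nat \<Rightarrow> 'b) \<Rightarrow> real" where
  "dist_Pi ys zs = (SUP n. seq_dist (ys n) (zs n) / real (Suc n))"

definition sigma_star :: "(nat \<Rightarrow> nat \<Rightarrow> 'b) \<Rightarrow> (nat \<Rightarrow> nat \<Rightarrow> 'b)" where
  "sigma_star ys = (\<lambda>n. shift (ys n))"

definition mcont :: "'x set \<Rightarrow> ('x \<Rightarrow> 'x \<Rightarrow> real) \<Rightarrow> ('y \<Rightarrow> 'y \<Rightarrow> real) \<Rightarrow> ('x \<Rightarrow> 'y) \<Rightarrow> bool" where
  "mcont S dS dT g \<longleftrightarrow>
     (\<forall>x\<in>S. \<forall>e>0. \<exists>\<delta>>0. \<forall>y\<in>S. dS x y < \<delta> \<longrightarrow> dT (g x) (g y) < e)"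

definition mucont :: "'x set \<Rightarrow> ('x \<Rightarrow> 'x \<Rightarrow> real) \<Rightarrow> ('y \<Rightarrow> 'y \<Rightarrow> real) \<Rightarrow> ('x \<Rightarrow> 'y) \<Rightarrow> bool" where
  "mucont S dS dT g \<longleftrightarrow>
     (\<forall>e>0. \<exists>\<delta>>0. \<forall>x\<in>S. \<forall>y\<in>S. dS x y < \<delta> \<longrightarrow> dT (g x) (g y) < e)"

definition conjugacy :: "('a::metric_space \<Rightarrow> 'a) \<Rightarrow> 'b set \<Rightarrow> ('b \<Rightarrow> 'b \<Rightarrow> real)
    \<Rightarrow> ('b \<Rightarrow> 'b) \<Rightarrow> ('a \<Rightarrow> 'b) \<Rightarrow> bool" where
  "conjugacy f L dL g h \<longleftrightarrow>
     bij_betw h UNIV L \<and> mcont UNIV dist dL h \<and> mcont L dL dist (inv_into UNIV h) \<and>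
     (\<forall>x. h (f x) = g (h x))"

definition uniform_conjugacy :: "('a::metric_space \<Rightarrow> 'a) \<Rightarrow> 'b set \<Rightarrow> ('b \<Rightarrow> 'b \<Rightarrow> real)
    \<Rightarrow> ('b \<Rightarrow> 'b) \<Rightarrow> ('a \<Rightarrow> 'b) \<Rightarrow> bool" where
  "uniform_conjugacy f L dL g h \<longleftrightarrow>
     conjugacy f L dL g h \<and> mucont UNIV dist dL h \<and> mucont L dL dist (inv_into UNIV h)"

end

theory Submission
  imports Defs
begin

lemma fin_delta:
  fixes N :: nat
  assumes "\<forall>i<N. \<exists>d>0. P i d"
    and mono: "\<And>i d d'. P i d \<Longrightarrow> 0 < d' \<Longrightarrow> d' \<le> d \<Longrightarrow> P i d'"
  shows "\<exists>d>0. \<forall>i<N. P i (d::real)"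
  using assms(1)
proof (induction N)
  case 0
  then show ?case by (rule_tac x=1 in exI) auto
next
  case (Suc N)
  then obtain d where d: "d > 0" "\<forall>i<N. P i d" by auto
  from Suc.prems obtain d' where d': "d' > 0" "P N d'" by auto
  show ?case
  proof (rule exI[of _ "min d d'"], intro conjI allI impI)
    show "0 < min d d'" using d d' by auto
    fix i assume "i < Suc N"
    then consider "i < N" | "i = N" by linarith
    then show "P i (min d d')"
    proof cases
      case 1 then show ?thesis using mono[of i d "min d d'"] d d' by auto
    next
      case 2 then show ?thesis using mono[of i d' "min d d'"] d d' by auto
    qed
  qed
qed

lemma cont_funpow: "continuous_on UNIV (f::'a::topological_space\<Rightarrow>'a) \<Longrightarrow> continuous_on UNIV (f ^^ i)"
proof (induction i)
  case 0 then show ?case by simp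
next
  case (Suc i)
  have "continuous_on (range f) (f ^^ i)" using continuous_on_subset[OF Suc.IH[OF Suc.prems]] by blast
  then have "continuous_on UNIV (f ^^ i \<circ> f)" by (rule continuous_on_compose[OF Suc.prems])
  then show ?case by (simp only: funpow_Suc_right)
qed

lemma ucont_funpow: "uniformly_continuous_on UNIV (f::'a::metric_space\<Rightarrow>'a) \<Longrightarrow> uniformly_continuous_on UNIV (f ^^ i)"
proof (induction i)
  case 0 then show ?case by (simp add: id_def uniformly_continuous_on_id)
next
  case (Suc i)
  have "uniformly_continuous_on (range f) (f ^^ i)"
    using Suc.IH[OF Suc.prems] unfolding uniformly_continuous_on_def by blast
  then have "uniformly_continuous_on UNIV (\<lambda>x. (f ^^ i) (f x))" by (rule uniformly_continuous_on_compose[OF Suc.prems])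
  then show ?case by (simp only: funpow_Suc_right o_def)
qed

lemma seq_dist_bounds: "0 \<le> seq_dist s t \<and> seq_dist s t \<le> 1"
  by (auto simp: seq_dist_def divide_simps)

lemma seq_dist_small:
  assumes "\<forall>i<N. s i = t i"
  shows "seq_dist s t \<le> 1 / real (Suc N)"
proof (cases "s = t")
  case True then show ?thesis by (simp add: seq_dist_def)
next
  case False
  then have ex: "\<exists>i. s i \<noteq> t i" by auto
  define L where "L = (LEAST i. s i \<noteq> t i)"
  have "s L \<noteq> t L" unfolding L_def using LeastI_ex[OF ex] .
  then have "N \<le> L" using assms by (meson not_le)
  then have "1 / real (Suc L) \<le> 1 / real (Suc N)"
    by (simp add: frac_le)
  then show ?thesis using False by (simp add: seq_dist_def L_def)
qed

lemma seq_dist_0: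
  assumes "s 0 \<noteq> t 0" shows "seq_dist s t = 1"
proof -
  have "s \<noteq> t" using assms by auto
  moreover have "(LEAST i. s i \<noteq> t i) = 0" using assms by (simp add: Least_eq_0)
  ultimately show ?thesis by (simp add: seq_dist_def)
qed

lemma dist_Pi_bdd: "bdd_above (range (\<lambda>n. seq_dist (ys n) (zs n) / real (Suc n)))"
proof (rule bdd_aboveI[of _ 1])
  fix y assume "y \<in> range (\<lambda>n. seq_dist (ys n) (zs n) / real (Suc n))"
  then obtain n where y: "y = seq_dist (ys n) (zs n) / real (Suc n)" by auto
  have "seq_dist (ys n) (zs n) / real (Suc n) \<le> seq_dist (ys n) (zs n)"
  proof -
    have "0 \<le> seq_dist (ys n) (zs n) * real n" using seq_dist_bounds[of "ys n" "zs n"] by simp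
    then show ?thesis by (simp add: divide_simps algebra_simps)
  qed
  then show "y \<le> 1" using y seq_dist_bounds[of "ys n" "zs n"] by linarith
qed

lemma dist_Pi_ge: "seq_dist (ys n) (zs n) / real (Suc n) \<le> dist_Pi ys zs"
  unfolding dist_Pi_def by (rule cSUP_upper[OF _ dist_Pi_bdd]) auto

lemma dist_Pi_le: "(\<And>n. seq_dist (ys n) (zs n) / real (Suc n) \<le> c) \<Longrightarrow> dist_Pi ys zs \<le> c"
  unfolding dist_Pi_def by (rule cSUP_least) auto

locale setting =
  fixes f :: "'a::metric_space \<Rightarrow> 'a" and U :: "nat \<Rightarrow> 'a set set"
  assumes cont: "continuous_on UNIV f"
    and defseq: "defining_sequence U"
    and compl: "complete_defseq U"
    and tame: "tame_defseq U"
    and shadow: "finite_shadowing f"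
begin

definition cell :: "nat \<Rightarrow> 'a \<Rightarrow> 'a set" where
  "cell n z = (THE B. B \<in> U n \<and> z \<in> B)"

lemma part: "clopen_partition (U n)" using defseq by (simp add: defining_sequence_def)

lemma cell_ex1: "\<exists>!B. B \<in> U n \<and> z \<in> B"
proof -
  have "z \<in> \<Union>(U n)" using part[of n] by (simp add: clopen_partition_def)
  then obtain B where "B \<in> U n" "z \<in> B" by auto
  moreover have "\<And>C. C \<in> U n \<Longrightarrow> z \<in> C \<Longrightarrow> C = B"
    using part[of n] calculation unfolding clopen_partition_def by blast
  ultimately show ?thesis by blast
qed

lemma cell: "cell n z \<in> U n" "z \<in> cell n z"
  using theI'[OF cell_ex1[of n z]] unfolding cell_def by auto

lemma cell_eq: "B \<in> U n \<Longrightarrow> z \<in> B \<Longrightarrow> cell n z = B"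
  using cell cell_ex1 by blast

lemma cell_Suc_sub: "cell (Suc n) z \<subseteq> cell n z"
proof -
  obtain V where "V \<in> U n" "cell (Suc n) z \<subseteq> V"
    using defseq cell(1)[where n="Suc n" and z=z] unfolding defining_sequence_def by blast
  moreover then have "z \<in> V" using cell(2) by blast
  ultimately show ?thesis using cell_eq by metis
qed

lemma cell_mono: "n \<le> m \<Longrightarrow> cell m z \<subseteq> cell n z"
proof (induction m rule: dec_induct)
  case base then show ?case by simp
next
  case (step m) then show ?case using cell_Suc_sub[of m z] by blast
qed

lemma cell_agree: "cell m z = cell m w \<Longrightarrow> n \<le> m \<Longrightarrow> cell n z = cell n w"
proof -
  assume a: "cell m z = cell m w" "n \<le> m"
  have "z \<in> cell n w" using a cell(2)[where n=m and z=z] cell_mono[of n m w] by auto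
  then show ?thesis using cell_eq[OF cell(1)] by metis
qed

lemma diam: "e > 0 \<Longrightarrow> \<exists>N. \<forall>n\<ge>N. \<forall>B\<in>U n. \<forall>x\<in>B. \<forall>y\<in>B. dist x y \<le> e"
  using tame unfolding tame_defseq_def by blast

lemma cell_diam: "e > 0 \<Longrightarrow> \<exists>N. \<forall>n\<ge>N. \<forall>z w. cell n z = cell n w \<longrightarrow> dist z w \<le> e"
proof -
  assume "e > 0"
  from diam[OF this] obtain N where N: "\<forall>n\<ge>N. \<forall>B\<in>U n. \<forall>x\<in>B. \<forall>y\<in>B. dist x y \<le> e" by auto
  show ?thesis
  proof (intro exI allI impI)
    fix n z w assume "N \<le> n" "cell n z = cell n w"
    then have "w \<in> cell n z" using cell(2)[where n=n and z=w] by simp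
    then show "dist z w \<le> e" using N \<open>N \<le> n\<close> cell(1)[where n=n and z=z] cell(2)[where n=n and z=z] by blast
  qed
qed

definition rho :: "nat \<Rightarrow> real" where
  "rho n = (SOME r. r > 0 \<and> (\<forall>B1\<in>U n. \<forall>B2\<in>U n. B1 \<noteq> B2 \<longrightarrow>
          (\<forall>x1\<in>B1. \<forall>x2\<in>B2. dist x1 x2 \<ge> r)))"

lemma rho: "rho n > 0" "\<forall>B1\<in>U n. \<forall>B2\<in>U n. B1 \<noteq> B2 \<longrightarrow>
          (\<forall>x1\<in>B1. \<forall>x2\<in>B2. dist x1 x2 \<ge> rho n)"
proof -
  have "\<exists>r. r > 0 \<and> (\<forall>B1\<in>U n. \<forall>B2\<in>U n. B1 \<noteq> B2 \<longrightarrow>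
          (\<forall>x1\<in>B1. \<forall>x2\<in>B2. dist x1 x2 \<ge> r))" using tame unfolding tame_defseq_def by blast
  from someI_ex[OF this] show "rho n > 0" "\<forall>B1\<in>U n. \<forall>B2\<in>U n. B1 \<noteq> B2 \<longrightarrow>
          (\<forall>x1\<in>B1. \<forall>x2\<in>B2. dist x1 x2 \<ge> rho n)" unfolding rho_def by auto
qed

lemma cell_close: "dist z w < rho n \<Longrightarrow> cell n z = cell n w"
proof (rule ccontr)
  assume "dist z w < rho n" "cell n z \<noteq> cell n w"
  then have "dist z w \<ge> rho n"
    using rho(2)[of n] cell(1)[where n=n and z=z] cell(1)[where n=n and z=w]
      cell(2)[where n=n and z=z] cell(2)[where n=n and z=w] by blast
  then show False using \<open>dist z w < rho n\<close> by simp
qed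


definition hh :: "'a \<Rightarrow> nat \<Rightarrow> nat \<Rightarrow> 'a set" where
  "hh x = (\<lambda>n i. cell n ((f ^^ i) x))"

lemma bond_cell: "bond (U n) (\<lambda>i. cell (Suc n) (g i)) = (\<lambda>i. cell n (g i))"
  unfolding bond_def
proof (rule ext, rule the_equality)
  fix i
  show "cell n (g i) \<in> U n \<and> cell (Suc n) (g i) \<subseteq> cell n (g i)"
    using cell(1) cell_Suc_sub by blast
  fix V assume "V \<in> U n \<and> cell (Suc n) (g i) \<subseteq> V"
  then show "V = cell n (g i)" using cell_eq cell(2)[where n="Suc n" and z="g i"] by blast
qed

lemma hh_in: "hh x \<in> inv_lim f U"
  unfolding inv_lim_def PO_def
proof (intro CollectI conjI allI)
  fix n i
  show "hh x n i \<in> U n" unfolding hh_def using cell(1) by blast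
  have "f ((f ^^ i) x) \<in> f ` hh x n i" unfolding hh_def using cell(2) by blast
  moreover have "f ((f ^^ i) x) \<in> hh x n (Suc i)" unfolding hh_def using cell(2) by simp
  ultimately show "f ` hh x n i \<inter> hh x n (Suc i) \<noteq> {}" by blast
next
  fix n
  show "hh x n = bond (U n) (hh x (Suc n))"
    unfolding hh_def using bond_cell[of n "\<lambda>i. (f ^^ i) x"] by simp
qed

lemma hh_f: "hh (f x) = sigma_star (hh x)"
  unfolding hh_def sigma_star_def shift_def
  by (simp add: funpow_Suc_right del: funpow.simps)

lemma hh_cell: "hh x = hh y \<Longrightarrow> cell n x = cell n y"
  unfolding hh_def by (drule fun_cong[of _ _ n], drule fun_cong[of _ _ 0]) simp

lemma hh_inj: "inj hh"
proof (rule injI, rule ccontr)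
  fix x y :: 'a assume eq: "hh x = hh y" and ne: "x \<noteq> y"
  then have "dist x y / 2 > 0" by simp
  from cell_diam[OF this] obtain N where "\<forall>n\<ge>N. \<forall>z w. cell n z = cell n w \<longrightarrow> dist z w \<le> dist x y / 2"
    by blast
  then have "dist x y \<le> dist x y / 2" using hh_cell[OF eq, of N] by blast
  then show False using ne by simp
qed

lemma hh_core:
  assumes "\<forall>i<N. dist ((f ^^ i) x) ((f ^^ i) y) < rho N"
  shows "dist_Pi (hh x) (hh y) \<le> 1 / real (Suc N)"
proof (rule dist_Pi_le)
  fix n
  have s: "0 \<le> seq_dist (hh x n) (hh y n)" "seq_dist (hh x n) (hh y n) \<le> 1"
    using seq_dist_bounds by auto
  have d: "seq_dist (hh x n) (hh y n) / real (Suc n) \<le> seq_dist (hh x n) (hh y n)"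
  proof -
    have "0 \<le> seq_dist (hh x n) (hh y n) * real n" using s by simp
    then show ?thesis by (simp add: divide_simps algebra_simps)
  qed
  show "seq_dist (hh x n) (hh y n) / real (Suc n) \<le> 1 / real (Suc N)"
  proof (cases "n < N")
    case True
    have "\<forall>i<N. hh x n i = hh y n i"
    proof (intro allI impI)
      fix i assume "i < N"
      then have "dist ((f ^^ i) x) ((f ^^ i) y) < rho N" using assms by blast
      then have "cell N ((f ^^ i) x) = cell N ((f ^^ i) y)" by (rule cell_close)
      then have "cell n ((f ^^ i) x) = cell n ((f ^^ i) y)" by (rule cell_agree) (use True in simp)
      then show "hh x n i = hh y n i" unfolding hh_def .
    qed
    then have "seq_dist (hh x n) (hh y n) \<le> 1 / real (Suc N)" by (rule seq_dist_small)
    then show ?thesis using d by linarith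
  next
    case False
    have "seq_dist (hh x n) (hh y n) / real (Suc n) \<le> 1 / real (Suc n)"
      using s by (simp add: divide_right_mono)
    also have "\<dots> \<le> 1 / real (Suc N)" using False by (simp add: frac_le)
    finally show ?thesis .
  qed
qed

lemma hh_inv_core:
  assumes "dist_Pi (hh x) (hh y) < 1 / real (Suc n)"
  shows "cell n x = cell n y"
proof (rule ccontr)
  assume "cell n x \<noteq> cell n y"
  then have "hh x n 0 \<noteq> hh y n 0" unfolding hh_def by simp
  then have "seq_dist (hh x n) (hh y n) = 1" by (rule seq_dist_0)
  then have "1 / real (Suc n) \<le> dist_Pi (hh x) (hh y)" using dist_Pi_ge[where ys="hh x" and zs="hh y" and n=n] by simp
  then show False using assms by simp
qed

lemma small_N: "(e::real) > 0 \<Longrightarrow> \<exists>N. 1 / real (Suc N) < e"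
proof -
  assume "e > 0"
  from ex_inverse_of_nat_less[OF this] obtain n where "n > 0" "inverse (real n) < e" by auto
  then have "1 / real (Suc (n - 1)) < e" by (simp add: inverse_eq_divide)
  then show ?thesis by blast
qed

lemma hh_cont: "mcont UNIV dist dist_Pi hh"
  unfolding mcont_def
proof (intro ballI allI impI)
  fix x :: 'a and e :: real assume "e > 0"
  from small_N[OF this] obtain N where N: "1 / real (Suc N) < e" by blast
  have "\<forall>i<N. \<exists>d>0. \<forall>y. dist x y < d \<longrightarrow> dist ((f ^^ i) x) ((f ^^ i) y) < rho N"
  proof (intro allI impI)
    fix i
    have "continuous_on UNIV (f ^^ i)" using cont_funpow[OF cont] .
    then obtain d where "d > 0" "\<forall>x'. dist x' x < d \<longrightarrow> dist ((f ^^ i) x') ((f ^^ i) x) < rho N"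
      unfolding continuous_on_iff using rho(1)[of N] by blast
    then show "\<exists>d>0. \<forall>y. dist x y < d \<longrightarrow> dist ((f ^^ i) x) ((f ^^ i) y) < rho N"
      by (metis dist_commute)
  qed
  from fin_delta[OF this] obtain d where d: "d > 0" "\<forall>i<N. \<forall>y. dist x y < d \<longrightarrow> dist ((f ^^ i) x) ((f ^^ i) y) < rho N"
    by force
  show "\<exists>\<delta>>0. \<forall>y\<in>UNIV. dist x y < \<delta> \<longrightarrow> dist_Pi (hh x) (hh y) < e"
  proof (intro exI[of _ d] conjI ballI impI)
    fix y assume "dist x y < d"
    then have "dist_Pi (hh x) (hh y) \<le> 1 / real (Suc N)" using d by (intro hh_core) blast
    then show "dist_Pi (hh x) (hh y) < e" using N by linarith
  qed (rule d(1))
qed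

lemma hh_ucont: "uniformly_continuous_on UNIV f \<Longrightarrow> mucont UNIV dist dist_Pi hh"
  unfolding mucont_def
proof (intro allI impI)
  fix e :: real assume uc: "uniformly_continuous_on UNIV f" and "e > 0"
  from small_N[OF \<open>e > 0\<close>] obtain N where N: "1 / real (Suc N) < e" by blast
  have "\<forall>i<N. \<exists>d>0. \<forall>x y. dist x y < d \<longrightarrow> dist ((f ^^ i) x) ((f ^^ i) y) < rho N"
  proof (intro allI impI)
    fix i
    have "uniformly_continuous_on UNIV (f ^^ i)" using ucont_funpow[OF uc] .
    then obtain d where "d > 0" "\<forall>x x'. dist x' x < d \<longrightarrow> dist ((f ^^ i) x') ((f ^^ i) x) < rho N"
      unfolding uniformly_continuous_on_def using rho(1)[of N] by blast
    then show "\<exists>d>0. \<forall>x y. dist x y < d \<longrightarrow> dist ((f ^^ i) x) ((f ^^ i) y) < rho N"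
      by blast
  qed
  from fin_delta[OF this] obtain d where d: "d > 0" "\<forall>i<N. \<forall>x y. dist x y < d \<longrightarrow> dist ((f ^^ i) x) ((f ^^ i) y) < rho N"
    by force
  show "\<exists>\<delta>>0. \<forall>x\<in>UNIV. \<forall>y\<in>UNIV. dist x y < \<delta> \<longrightarrow> dist_Pi (hh x) (hh y) < e"
  proof (intro exI[of _ d] conjI ballI impI)
    fix x y :: 'a assume "dist x y < d"
    then have "dist_Pi (hh x) (hh y) \<le> 1 / real (Suc N)" using d by (intro hh_core) blast
    then show "dist_Pi (hh x) (hh y) < e" using N by linarith
  qed (rule d(1))
qed

lemma hh_inv_ucont: "mucont (range hh) dist_Pi dist (inv_into UNIV hh)"
  unfolding mucont_def
proof (intro allI impI)
  fix e :: real assume "e > 0"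
  then have "e / 2 > 0" by simp
  from cell_diam[OF this] obtain N where N: "\<forall>n\<ge>N. \<forall>z w. cell n z = cell n w \<longrightarrow> dist z w \<le> e / 2"
    by blast
  show "\<exists>\<delta>>0. \<forall>p\<in>range hh. \<forall>q\<in>range hh. dist_Pi p q < \<delta> \<longrightarrow> dist (inv_into UNIV hh p) (inv_into UNIV hh q) < e"
  proof (intro exI[of _ "1 / real (Suc N)"] conjI ballI impI)
    fix p q assume "p \<in> range hh" "q \<in> range hh" and pq: "dist_Pi p q < 1 / real (Suc N)"
    then obtain x y where xy: "p = hh x" "q = hh y" by blast
    have "cell N x = cell N y" using hh_inv_core pq xy by simp
    then have "dist x y \<le> e / 2" using N by blast
    then show "dist (inv_into UNIV hh p) (inv_into UNIV hh q) < e"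
      using xy hh_inj \<open>e > 0\<close> by (simp add: inv_into_f_f)
  qed simp
qed

lemma hh_surj:
  assumes ys: "ys \<in> inv_lim f U"
  shows "ys \<in> range hh"
proof -
  have Oin: "\<And>k i. ys k i \<in> U k" and Ostep: "\<And>k i. f ` (ys k i) \<inter> ys k (Suc i) \<noteq> {}"
    and B: "\<And>k. ys k = bond (U k) (ys (Suc k))"
    using ys unfolding inv_lim_def PO_def by blast+
  have Ocell: "\<And>k i z. z \<in> ys k i \<Longrightarrow> cell k z = ys k i" using cell_eq Oin by blast
  have Osub: "\<And>k i. ys (Suc k) i \<subseteq> ys k i"
  proof -
    fix k i :: nat
    obtain w where w: "w \<in> ys (Suc k) i" using Ostep[of "Suc k" i] by blast
    have "ys k i = (THE V. V \<in> U k \<and> ys (Suc k) i \<subseteq> V)"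
      using fun_cong[OF B[of k], of i] unfolding bond_def by simp
    also have "\<dots> = cell k w"
    proof (rule the_equality)
      show "cell k w \<in> U k \<and> ys (Suc k) i \<subseteq> cell k w"
        using cell(1) cell_Suc_sub Ocell[OF w] by metis
      fix V assume "V \<in> U k \<and> ys (Suc k) i \<subseteq> V"
      then show "V = cell k w" using cell_eq w by blast
    qed
    finally show "ys (Suc k) i \<subseteq> ys k i" using Ocell[OF w] cell_Suc_sub by metis
  qed
  have Omono: "\<And>k m i. k \<le> m \<Longrightarrow> ys m i \<subseteq> ys k i"
  proof -
    fix k m i :: nat assume "k \<le> m"
    then show "ys m i \<subseteq> ys k i"
    proof (induction m rule: dec_induct)
      case base then show ?case by simp
    next
      case (step m) then show ?case using Osub[of m i] by blast
    qed
  qed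
  define a where "a k i = (SOME p. p \<in> ys k i \<and> f p \<in> ys k (Suc i))" for k i
  have a: "\<And>k i. a k i \<in> ys k i \<and> f (a k i) \<in> ys k (Suc i)"
  proof -
    fix k i :: nat
    have "\<exists>p. p \<in> ys k i \<and> f p \<in> ys k (Suc i)" using Ostep[of k i] by blast
    from someI_ex[OF this] show "a k i \<in> ys k i \<and> f (a k i) \<in> ys k (Suc i)" unfolding a_def .
  qed
  have step: "\<And>j m. \<exists>z. \<forall>i\<le>m. (f ^^ i) z \<in> ys j i"
  proof -
    fix j m :: nat
    obtain \<delta> where "\<delta> > 0" and dl: "\<forall>(m::nat) (xs::nat \<Rightarrow> 'a).
        (\<forall>i<m. dist (f (xs i)) (xs (Suc i)) < \<delta>) \<longrightarrow>
        (\<exists>x. \<forall>i\<le>m. dist ((f ^^ i) x) (xs i) < rho j)"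
      using shadow rho(1)[of j] unfolding finite_shadowing_def by blast
    then have "\<delta> / 2 > 0" by simp
    from cell_diam[OF this] obtain N where N: "\<forall>n\<ge>N. \<forall>z w. cell n z = cell n w \<longrightarrow> dist z w \<le> \<delta> / 2"
      by blast
    define k where "k = max N j"
    have "\<forall>i<m. dist (f (a k i)) (a k (Suc i)) < \<delta>"
    proof (intro allI impI)
      fix i
      have "cell k (f (a k i)) = cell k (a k (Suc i))" using Ocell a by metis
      moreover have "N \<le> k" by (simp add: k_def)
      ultimately have "dist (f (a k i)) (a k (Suc i)) \<le> \<delta> / 2" using N by blast
      then show "dist (f (a k i)) (a k (Suc i)) < \<delta>" using \<open>\<delta> > 0\<close> by simp
    qed
    then obtain z where z: "\<forall>i\<le>m. dist ((f ^^ i) z) (a k i) < rho j" using dl by blast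
    have "\<forall>i\<le>m. (f ^^ i) z \<in> ys j i"
    proof (intro allI impI)
      fix i assume "i \<le> m"
      then have "cell j ((f ^^ i) z) = cell j (a k i)" using z cell_close by blast
      also have "\<dots> = ys j i" using a[of k i] Omono[of j k i] Ocell k_def by auto
      finally show "(f ^^ i) z \<in> ys j i" using cell(2)[where n=j and z="(f ^^ i) z"] by simp
    qed
    then show "\<exists>z. \<forall>i\<le>m. (f ^^ i) z \<in> ys j i" by blast
  qed
  define z where "z k = (SOME z. \<forall>i\<le>k. (f ^^ i) z \<in> ys k i)" for k
  have zk: "\<And>k i. i \<le> k \<Longrightarrow> (f ^^ i) (z k) \<in> ys k i"
    using someI_ex[OF step] unfolding z_def by blast
  have "(\<Inter>n. ys n 0) \<noteq> {}"
    using compl[unfolded complete_defseq_def, rule_format, of "\<lambda>n. ys n 0"] Oin Osub by blast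
  then obtain x where x: "\<And>n. x \<in> ys n 0" by blast
  have lim: "z \<longlonglongrightarrow> x"
  proof (rule metric_LIMSEQ_I)
    fix r :: real assume "r > 0"
    then have "r / 2 > 0" by simp
    from cell_diam[OF this] obtain N where N: "\<forall>n\<ge>N. \<forall>z w. cell n z = cell n w \<longrightarrow> dist z w \<le> r / 2"
      by blast
    show "\<exists>no. \<forall>k\<ge>no. dist (z k) x < r"
    proof (intro exI allI impI)
      fix k assume "N \<le> k"
      then have "z k \<in> ys N 0" using zk[of 0 k] Omono[of N k 0] by auto
      then have "cell N (z k) = cell N x" using Ocell x by metis
      then have "dist (z k) x \<le> r / 2" using N by blast
      then show "dist (z k) x < r" using \<open>r > 0\<close> by simp
    qed
  qed
  have mem: "(f ^^ i) x \<in> ys j i" for i j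
  proof (rule Lim_in_closed_set)
    show "closed (ys j i)" using part[of j] Oin[of j i] unfolding clopen_partition_def by blast
    show "eventually (\<lambda>k. (f ^^ i) (z k) \<in> ys j i) sequentially"
      unfolding eventually_sequentially
    proof (intro exI allI impI)
      fix k assume "max i j \<le> k"
      then show "(f ^^ i) (z k) \<in> ys j i" using zk[of i k] Omono[of j k i] by auto
    qed
    show "(sequentially :: nat filter) \<noteq> bot" by simp
    have "isCont (f ^^ i) x"
      using cont_funpow[OF cont, of i] continuous_on_eq_continuous_at[of UNIV] by blast
    from isCont_tendsto_compose[OF this lim]
    show "((\<lambda>k. (f ^^ i) (z k)) \<longlongrightarrow> (f ^^ i) x) sequentially" .
  qed
  have "hh x = ys" unfolding hh_def using Ocell mem by (intro ext) blast
  then show ?thesis by blast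
qed

lemma range_hh: "range hh = inv_lim f U"
  using hh_in hh_surj by blast

lemma conj: "conjugacy f (inv_lim f U) dist_Pi sigma_star hh"
proof -
  have "mcont (range hh) dist_Pi dist (inv_into UNIV hh)"
    using hh_inv_ucont unfolding mucont_def mcont_def by blast
  then show ?thesis
    unfolding conjugacy_def using hh_inj hh_cont hh_f range_hh
    by (simp add: bij_betw_def)
qed

lemma uconj: "uniformly_continuous_on UNIV f \<Longrightarrow> uniform_conjugacy f (inv_lim f U) dist_Pi sigma_star hh"
  unfolding uniform_conjugacy_def using conj hh_ucont hh_inv_ucont range_hh by simp

end

theorem theorem4p15:
  fixes f :: "'a::metric_space \<Rightarrow> 'a"
    and \<U> :: "nat \<Rightarrow> 'a set set"
  assumes separable: "\<exists>D::'a set. countable D \<and> closure D = UNIV"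
    and cont: "continuous_on UNIV f"
    and defseq: "defining_sequence \<U>"
    and compl: "complete_defseq \<U>"
    and tame: "tame_defseq \<U>"
    and shadow: "finite_shadowing f"
  shows "(\<exists>h. conjugacy f (inv_lim f \<U>) dist_Pi sigma_star h)
    \<and> (uniformly_continuous_on UNIV f \<longrightarrow>
         (\<exists>h. uniform_conjugacy f (inv_lim f \<U>) dist_Pi sigma_star h))"
proof -
  interpret S: setting f \<U> using cont defseq compl tame shadow by unfold_locales
  show ?thesis using S.conj S.uconj by blast
qed

end
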